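(* In the setting of the context, for every $\alpha>2$ there exists a constant $C_\alpha>0$ such that $E_\varepsilon\ge C_\alpha\,\varepsilon^{\frac{3}{\alpha+1}-1}$ for all $0<\varepsilon\le\varepsilon^*$. In the case where the solid has locally a flat bottom (see context), there exists $C_\infty>0$ such that $E_\varepsilon\ge C_\infty\varepsilon^{-1}$ for all $0<\varepsilon\le\varepsilon^*$.
   Context: Notation: $e_2=(0,1)$. Geometry: $\mathsf C\subset\mathbb R^2$ is a smooth bounded connected open set, symmetric with respect to $\{\xi_1=0\}$, with $0\in\partial\mathsf C$, such that near the origin $\partial\mathsf C$ is a segment of $\{\xi_2=0\}$ with $\mathsf C$ locally above it. $S_0$ is compact, connected, symmetric with respect to $\{\xi_1=0\}$, and $\varepsilon^*>0$ is such that $S_\varepsilon:=S_0+\varepsilon e_2\subset\mathsf C$ for $0<\varepsilon\le\varepsilon^*$. In the cusp case there are $\kappa>0$, $\alpha>0$, $\delta^*>0$ such that for $0\le\varepsilon\le\varepsilon^*$, near the origin $\mathsf C\setminus S_\varepsilon$ coincides with $\{|\xi_1|<\delta^*,\ 0<\xi_2<\kappa|\xi_1|^{1+\alpha}+\varepsilon\}$. In the flat bottom case, this is replaced by: near the origin $\mathsf C\setminus S_\varepsilon$ coincides with $\{|\xi_1|<\delta^*,\ 0<\xi_2<h(\xi_1)+\varepsilon\}$ where $h\ge0$ is a smooth function vanishing on a neighbourhood of $0$. Let $\Omega_\varepsilon:=(\mathsf C\setminus S_\varepsilon)\cap\{\xi_1<0\}$, $\Gamma_\varepsilon:=\partial S_\varepsilon\cap\{\xi_1<0\}$,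 $n$ the outward unit normal to $\Omega_\varepsilon$. For $\varepsilon>0$, $U_\varepsilon\in H^1(\Omega_\varepsilon)$ is a weak solution of $\Delta U_\varepsilon=0$ in $\Omega_\varepsilon$, $\partial_nU_\varepsilon=n\cdot e_2$ on $\Gamma_\varepsilon$, $\partial_nU_\varepsilon=0$ on $\partial\Omega_\varepsilon\setminus\Gamma_\varepsilon$, and $E_\varepsilon=\int_{\Omega_\varepsilon}|\nabla U_\varepsilon|^2d\xi$. *)

theory Defs
  imports "HOL-Analysis.Analysis"
begin

text \<open>Points of the plane are elements of real^2; coordinate xi_1 is x$1, xi_2 is x$2.\<close>

definition e2 :: "real^2" where
  "e2 = axis 2 1"

definition reflect1 :: "real^2 \<Rightarrow> real^2" where
  "reflect1 x = (\<chi> i. if i = 1 then - (x$1) else x$i)"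

definition symmetric1 :: "(real^2) set \<Rightarrow> bool" where
  "symmetric1 A \<longleftrightarrow> reflect1 ` A = A"

definition smooth_fun :: "(real \<Rightarrow> real) \<Rightarrow> bool" where
  "smooth_fun h \<longleftrightarrow> (\<forall>n x. (deriv ^^ n) h differentiable (at x))"

definition smooth_domain :: "(real^2) set \<Rightarrow> bool" where
  "smooth_domain C \<longleftrightarrow> open C \<and>
     (\<forall>p\<in>frontier C. \<exists>r>0. \<exists>u v h. norm u = 1 \<and> norm v = 1 \<and> u \<bullet> v = 0 \<and>
        smooth_fun h \<and>
        C \<inter> ball p r = {x \<in> ball p r. (x - p) \<bullet> u < h ((x - p) \<bullet> v)})"

definition C1c :: "(real^2 \<Rightarrow> real) \<Rightarrow> (real^2 \<Rightarrow> real^2 \<Rightarrow> real) \<Rightarrow> bool" where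
  "C1c \<Phi> \<Phi>' \<longleftrightarrow> (\<forall>x. (\<Phi> has_derivative \<Phi>' x) (at x)) \<and>
     (\<forall>v. continuous_on UNIV (\<lambda>x. \<Phi>' x v)) \<and>
     compact (closure {x. \<Phi> x \<noteq> 0})"

definition L2_on :: "(real^2) set \<Rightarrow> (real^2 \<Rightarrow> 'b::euclidean_space) \<Rightarrow> bool" where
  "L2_on \<Omega> f \<longleftrightarrow> f \<in> borel_measurable (lebesgue_on \<Omega>) \<and>
     integrable (lebesgue_on \<Omega>) (\<lambda>x. (norm (f x))^2)"

definition H1_weak_grad :: "(real^2) set \<Rightarrow> (real^2 \<Rightarrow> real) \<Rightarrow> (real^2 \<Rightarrow> real^2) \<Rightarrow> bool" where
  "H1_weak_grad \<Omega> U G \<longleftrightarrow> L2_on \<Omega> U \<and> L2_on \<Omega> G \<and>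
     (\<forall>\<phi> \<phi>'. C1c \<phi> \<phi>' \<and> closure {x. \<phi> x \<noteq> 0} \<subseteq> \<Omega> \<longrightarrow>
        (\<forall>v. integral\<^sup>L (lebesgue_on \<Omega>) (\<lambda>x. U x * \<phi>' x v)
             = - integral\<^sup>L (lebesgue_on \<Omega>) (\<lambda>x. (G x \<bullet> v) * \<phi> x)))"

definition S_eps :: "(real^2) set \<Rightarrow> real \<Rightarrow> (real^2) set" where
  "S_eps S0 \<epsilon> = (\<lambda>x. x + \<epsilon> *\<^sub>R e2) ` S0"

definition Omega_eps :: "(real^2) set \<Rightarrow> (real^2) set \<Rightarrow> real \<Rightarrow> (real^2) set" where
  "Omega_eps C S0 \<epsilon> = (C - S_eps S0 \<epsilon>) \<inter> {x. x$1 < 0}"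

text \<open>Weak formulation of: Delta U = 0 in Omega_eps, d_n U = n.e2 on Gamma_eps,
  d_n U = 0 on the rest of the boundary. The boundary term
  int_{Gamma_eps} (n.e2) Phi dsigma is written, via the divergence theorem on
  S_eps cap {xi_1<0} (whose normal on the symmetry line is horizontal), as
  - int_{S_eps cap {xi_1<0}} d_2 Phi.\<close>
definition weak_neumann_sol ::
  "(real^2) set \<Rightarrow> (real^2) set \<Rightarrow> real \<Rightarrow> (real^2 \<Rightarrow> real) \<Rightarrow> (real^2 \<Rightarrow> real^2) \<Rightarrow> bool" where
  "weak_neumann_sol C S0 \<epsilon> U G \<longleftrightarrow>
     H1_weak_grad (Omega_eps C S0 \<epsilon>) U G \<and>
     (\<forall>\<Phi> \<Phi>'. C1c \<Phi> \<Phi>' \<longrightarrow>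
        integral\<^sup>L (lebesgue_on (Omega_eps C S0 \<epsilon>)) (\<lambda>x. \<Phi>' x (G x))
        = - integral\<^sup>L (lebesgue_on (S_eps S0 \<epsilon> \<inter> {x. x$1 < 0})) (\<lambda>x. \<Phi>' x e2))"

definition energy :: "(real^2) set \<Rightarrow> (real^2 \<Rightarrow> real^2) \<Rightarrow> real" where
  "energy \<Omega> G = integral\<^sup>L (lebesgue_on \<Omega>) (\<lambda>x. (norm (G x))^2)"

end

theory Submission
  imports Defs
begin

definition pp :: "real \<Rightarrow> real" where "pp t = (max 0 t)^2"

lemma pp_deriv: "(pp has_real_derivative 2 * max 0 t) (at t)"
proof (cases "t = 0")
  case False
  show ?thesis
  proof (cases "t > 0")
    case True
    have "((\<lambda>s. s^2) has_real_derivative 2 * t) (at t)"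
      by (auto intro!: derivative_eq_intros)
    then have "(pp has_real_derivative 2 * t) (at t)"
      by (rule has_field_derivative_transform_within_open[where S="{0<..}"]) (use True in \<open>auto simp: pp_def\<close>)
    then show ?thesis using True by simp
  next
    case f2: False
    then have "t < 0" using False by simp
    have "((\<lambda>s. 0) has_real_derivative 0) (at t)" by simp
    then have "(pp has_real_derivative 0) (at t)"
      by (rule has_field_derivative_transform_within_open[where S="{..<0}"]) (use \<open>t<0\<close> in \<open>auto simp: pp_def\<close>)
    then show ?thesis using \<open>t < 0\<close> by simp
  qed
next
  case True
  have "((\<lambda>s. pp s) has_real_derivative 0) (at 0)"
    unfolding has_field_derivative_iff
  proof (rule Lim_null_comparison)
    show "\<forall>\<^sub>F x in at 0. norm ((pp x - pp 0) / (x - 0)) \<le> \<bar>x\<bar>"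
    proof (intro always_eventually allI)
      fix x :: real
      have a: "pp x \<le> x^2" "0 \<le> pp x" "pp 0 = 0"
        by (auto simp: pp_def max_def)
      show "norm ((pp x - pp 0) / (x - 0)) \<le> \<bar>x\<bar>"
      proof (cases "x = 0")
        case False
        then have "\<bar>pp x / x\<bar> = pp x / \<bar>x\<bar>" using a by simp
        also have "\<dots> \<le> x^2 / \<bar>x\<bar>" using a False by (simp add: divide_right_mono)
        also have "\<dots> = \<bar>x\<bar>" using False by (cases "x > 0") (simp_all add: power2_eq_square)
        finally show ?thesis using a by simp
      qed (simp add: a)
    qed
    show "((\<lambda>x::real. \<bar>x\<bar>) \<longlongrightarrow> 0) (at 0)"
      using tendsto_rabs[OF tendsto_ident_at[of "0::real" UNIV]] by simp
  qed
  then show ?thesis using True by simp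
qed

definition RR :: "real \<Rightarrow> real" where
  "RR u = 2 * pp u - 4 * pp (u - 1/2) + 2 * pp (u - 1)"
definition RR' :: "real \<Rightarrow> real" where
  "RR' u = 4 * max 0 u - 8 * max 0 (u - 1/2) + 4 * max 0 (u - 1)"

lemma pp_shift_deriv: "((\<lambda>z. pp (z + c)) has_real_derivative 2 * max 0 (u + c)) (at u)"
proof -
  have "((\<lambda>z. z + c) has_real_derivative 1) (at u)" by (auto intro!: derivative_eq_intros)
  from DERIV_chain2[OF pp_deriv this] show ?thesis by simp
qed

lemma RR_deriv: "(RR has_real_derivative RR' u) (at u)"
proof -
  have a: "((\<lambda>z. pp (z + 0)) has_real_derivative 2 * max 0 (u + 0)) (at u)" by (rule pp_shift_deriv)
  have b: "((\<lambda>z. pp (z + (-1/2))) has_real_derivative 2 * max 0 (u + (-1/2))) (at u)" by (rule pp_shift_deriv)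
  have c: "((\<lambda>z. pp (z + (-1))) has_real_derivative 2 * max 0 (u + (-1))) (at u)" by (rule pp_shift_deriv)
  have "((\<lambda>z. 2 * pp (z + 0) - 4 * pp (z + (-1/2)) + 2 * pp (z + (-1))) has_real_derivative
     2 * (2 * max 0 (u + 0)) - 4 * (2 * max 0 (u + (-1/2))) + 2 * (2 * max 0 (u + (-1)))) (at u)"
    by (intro DERIV_add DERIV_diff DERIV_cmult a b c)
  then show ?thesis unfolding RR_def[abs_def] RR'_def by (simp add: algebra_simps)
qed

lemma RR'_cont: "continuous_on UNIV RR'"
  unfolding RR'_def by (intro continuous_intros)

lemma RR_props:
  "0 \<le> RR u" "RR u \<le> 1" "u \<le> 0 \<Longrightarrow> RR u = 0" "1 \<le> u \<Longrightarrow> RR u = 1"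
  "0 \<le> RR' u" "RR' u \<le> 2" "u \<le> 0 \<Longrightarrow> RR' u = 0" "1 \<le> u \<Longrightarrow> RR' u = 0"
  "1/4 \<le> u \<Longrightarrow> u \<le> 3/4 \<Longrightarrow> 1 \<le> RR' u"
proof -
  consider "u \<le> 0" | "0 \<le> u \<and> u \<le> 1/2" | "1/2 \<le> u \<and> u \<le> 1" | "1 \<le> u" by linarith
  note c = this
  have "0 \<le> RR u \<and> RR u \<le> 1"
  proof (rule c)
    assume "0 \<le> u \<and> u \<le> 1/2"
    then have "RR u = 2 * u^2" by (auto simp: RR_def pp_def max_def)
    moreover have "u^2 \<le> (1/2)^2" using \<open>0 \<le> u \<and> u \<le> 1/2\<close> by (intro power_mono) auto
    ultimately show ?thesis by (simp add: power2_eq_square)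
  next
    assume h: "1/2 \<le> u \<and> u \<le> 1"
    then have "RR u = 1 - 2 * (1 - u)^2" by (auto simp: RR_def pp_def max_def power2_eq_square algebra_simps)
    moreover have "(1-u)^2 \<le> (1/2)^2" using h by (intro power_mono) auto
    ultimately show ?thesis by (simp add: power2_eq_square)
  qed (auto simp: RR_def pp_def max_def power2_eq_square algebra_simps)
  then show "0 \<le> RR u" "RR u \<le> 1" by auto
  show "u \<le> 0 \<Longrightarrow> RR u = 0" by (auto simp: RR_def pp_def max_def)
  show "1 \<le> u \<Longrightarrow> RR u = 1" by (auto simp: RR_def pp_def max_def power2_eq_square algebra_simps)
  show "0 \<le> RR' u" by (rule c) (auto simp: RR'_def max_def)
  show "RR' u \<le> 2" by (rule c) (auto simp: RR'_def max_def)
  show "u \<le> 0 \<Longrightarrow> RR' u = 0" by (auto simp: RR'_def max_def)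
  show "1 \<le> u \<Longrightarrow> RR' u = 0" by (auto simp: RR'_def max_def)
  show "1/4 \<le> u \<Longrightarrow> u \<le> 3/4 \<Longrightarrow> 1 \<le> RR' u" by (auto simp: RR'_def max_def)
qed

definition TT :: "real \<Rightarrow> real" where "TT s = RR (s + 2) * RR (2 - s)"
definition TT' :: "real \<Rightarrow> real" where "TT' s = RR' (s + 2) * RR (2 - s) - RR (s + 2) * RR' (2 - s)"

lemma TT_deriv: "(TT has_real_derivative TT' s) (at s)"
proof -
  have d1: "((\<lambda>z. z + 2) has_real_derivative 1) (at s)" by (auto intro!: derivative_eq_intros)
  have d2: "((\<lambda>z. 2 - z) has_real_derivative -1) (at s)" by (auto intro!: derivative_eq_intros)
  have a: "((\<lambda>z. RR (z + 2)) has_real_derivative RR' (s + 2) * 1) (at s)" by (rule DERIV_chain2[OF RR_deriv d1])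
  have b: "((\<lambda>z. RR (2 - z)) has_real_derivative RR' (2 - s) * -1) (at s)" by (rule DERIV_chain2[OF RR_deriv d2])
  have "((\<lambda>s. RR (s + 2) * RR (2 - s)) has_real_derivative
     RR (s + 2) * (RR' (2 - s) * - 1) + (RR' (s + 2) * 1) * RR (2 - s)) (at s)"
    by (rule DERIV_mult'[OF a b])
  then show ?thesis unfolding TT_def[abs_def] TT'_def by (simp add: algebra_simps)
qed

lemma RR_cont: "continuous_on UNIV RR"
  unfolding RR_def pp_def by (intro continuous_intros)

lemma TT'_cont: "continuous_on UNIV TT'"
proof -
  have "continuous_on UNIV (\<lambda>s. RR' (s + 2) * RR (2 - s) - RR (s + 2) * RR' (2 - s))"
    by (intro continuous_intros continuous_on_compose2[OF RR'_cont] continuous_on_compose2[OF RR_cont]) auto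
  then show ?thesis unfolding TT'_def[abs_def] .
qed

lemma TT_props:
  "0 \<le> TT s" "TT s \<le> 1" "\<bar>s\<bar> \<le> 1 \<Longrightarrow> TT s = 1" "2 \<le> \<bar>s\<bar> \<Longrightarrow> TT s = 0"
  "\<bar>s\<bar> \<le> 1 \<Longrightarrow> TT' s = 0" "2 \<le> \<bar>s\<bar> \<Longrightarrow> TT' s = 0"
  "\<bar>TT' s\<bar> \<le> 4" "0 \<le> s \<Longrightarrow> TT' s \<le> 0" "5/4 \<le> s \<Longrightarrow> s \<le> 7/4 \<Longrightarrow> TT' s \<le> -1"
proof -
  note R = RR_props
  show "0 \<le> TT s" unfolding TT_def using R by simp
  show "TT s \<le> 1" unfolding TT_def using R by (simp add: mult_le_one)
  show "\<bar>s\<bar> \<le> 1 \<Longrightarrow> TT s = 1" unfolding TT_def using R(4) by simp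
  show "2 \<le> \<bar>s\<bar> \<Longrightarrow> TT s = 0" unfolding TT_def using R(3)[of "s+2"] R(3)[of "2-s"] by (cases "s \<ge> 0") auto
  show "\<bar>s\<bar> \<le> 1 \<Longrightarrow> TT' s = 0" unfolding TT'_def using R(8) by simp
  show "2 \<le> \<bar>s\<bar> \<Longrightarrow> TT' s = 0" unfolding TT'_def
    using R(3)[of "s+2"] R(3)[of "2-s"] R(7)[of "s+2"] R(7)[of "2-s"] by (cases "s \<ge> 0") auto
  have b1: "\<bar>RR' (s + 2) * RR (2 - s)\<bar> \<le> 2" using R[of "s+2"] R[of "2-s"]
    by (simp add: abs_mult) (metis mult_le_one mult.commute mult_mono one_le_numeral order_refl zero_le_numeral mult_1_right)
  have b2: "\<bar>RR (s + 2) * RR' (2 - s)\<bar> \<le> 2" using R[of "s+2"] R[of "2-s"]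
    by (simp add: abs_mult) (metis mult_mono mult_1_left zero_le_one)
  show "\<bar>TT' s\<bar> \<le> 4" unfolding TT'_def using b1 b2 by linarith
  show "0 \<le> s \<Longrightarrow> TT' s \<le> 0" unfolding TT'_def using R(4)[of "s+2"] R(8)[of "s+2"] R(5)[of "2-s"] by simp
  show "5/4 \<le> s \<Longrightarrow> s \<le> 7/4 \<Longrightarrow> TT' s \<le> -1" unfolding TT'_def
    using R(4)[of "s+2"] R(8)[of "s+2"] R(9)[of "2-s"] by simp
qed

lemma vec2_decomp: "(v::real^2) = v$1 *\<^sub>R axis 1 1 + v$2 *\<^sub>R axis 2 1"
  by (simp add: vec_eq_iff forall_2 axis_def)

lemma lin2:
  assumes "linear (f :: real^2 \<Rightarrow> real)"
  shows "f v = v$1 * f (axis 1 1) + v$2 * f (axis 2 1)"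
proof -
  have "f v = f (v$1 *\<^sub>R axis 1 1 + v$2 *\<^sub>R axis 2 1)" by (subst vec2_decomp) simp
  also have "\<dots> = v$1 * f (axis 1 1) + v$2 * f (axis 2 1)"
    using assms by (simp add: linear_add linear_scale)
  finally show ?thesis .
qed

lemma C1c_linear: "C1c \<Phi> \<Phi>' \<Longrightarrow> linear (\<Phi>' x)"
  unfolding C1c_def by (meson has_derivative_linear)

lemma amgm: fixes a b l :: real assumes "l > 0" shows "a * b \<le> (l * a^2 + b^2 / l) / 2"
proof -
  have "0 \<le> (l * a - b)^2 / l" using assms by simp
  also have "(l * a - b)^2 / l = l * a^2 - 2 * a * b + b^2 / l" using assms
    by (simp add: field_simps power2_eq_square)
  finally have "0 \<le> l * a^2 - 2 * a * b + b^2 / l" .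
  then show ?thesis by simp
qed

lemma energy_lb:
  fixes C S0 :: "(real^2) set" and \<epsilon> :: real
  defines "\<Omega> \<equiv> Omega_eps C S0 \<epsilon>"
  assumes ws: "weak_neumann_sol C S0 \<epsilon> U G"
    and \<Phi>: "C1c \<Phi> \<Phi>'"
    and \<Omega>m: "\<Omega> \<in> sets lebesgue"
    and k: "\<And>x v. x \<in> \<Omega> \<Longrightarrow> \<bar>\<Phi>' x v\<bar> \<le> k x * norm v"
    and kint: "integrable (lebesgue_on \<Omega>) (\<lambda>x. (k x)^2)"
    and Lpos: "0 < - integral\<^sup>L (lebesgue_on (S_eps S0 \<epsilon> \<inter> {x. x$1 < 0})) (\<lambda>x. \<Phi>' x e2)"
  shows "0 < integral\<^sup>L (lebesgue_on \<Omega>) (\<lambda>x. (k x)^2) \<and>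
     (- integral\<^sup>L (lebesgue_on (S_eps S0 \<epsilon> \<inter> {x. x$1 < 0})) (\<lambda>x. \<Phi>' x e2))^2
       / integral\<^sup>L (lebesgue_on \<Omega>) (\<lambda>x. (k x)^2) \<le> energy \<Omega> G"
proof -
  define L where "L = - integral\<^sup>L (lebesgue_on (S_eps S0 \<epsilon> \<inter> {x. x$1 < 0})) (\<lambda>x. \<Phi>' x e2)"
  define D where "D = integral\<^sup>L (lebesgue_on \<Omega>) (\<lambda>x. (k x)^2)"
  define E where "E = energy \<Omega> G"
  have H1: "H1_weak_grad \<Omega> U G" and weq: "integral\<^sup>L (lebesgue_on \<Omega>) (\<lambda>x. \<Phi>' x (G x)) = L"
    using ws \<Phi> unfolding weak_neumann_sol_def \<Omega>_def L_def by auto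
  then have Gm: "G \<in> borel_measurable (lebesgue_on \<Omega>)"
    and Gint: "integrable (lebesgue_on \<Omega>) (\<lambda>x. (norm (G x))^2)"
    unfolding H1_weak_grad_def L2_on_def by auto
  have E_def': "E = integral\<^sup>L (lebesgue_on \<Omega>) (\<lambda>x. (norm (G x))^2)" unfolding E_def energy_def ..
  have lin: "\<And>x. linear (\<Phi>' x)" using C1c_linear[OF \<Phi>] .
  have cont: "\<And>v. continuous_on UNIV (\<lambda>x. \<Phi>' x v)" using \<Phi> unfolding C1c_def by auto
  have m1: "(\<lambda>x. \<Phi>' x v) \<in> borel_measurable (lebesgue_on \<Omega>)" for v
    by (rule continuous_imp_measurable_on_sets_lebesgue[OF continuous_on_subset[OF cont] \<Omega>m]) auto
  have mc: "(\<lambda>x. G x $ i) \<in> borel_measurable (lebesgue_on \<Omega>)" for i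
  proof -
    have "(\<lambda>v::real^2. v $ i) \<in> borel_measurable borel"
      by (intro borel_measurable_continuous_onI continuous_on_component continuous_on_id)
    from measurable_compose[OF Gm this] show ?thesis by (simp add: o_def)
  qed
  have fm: "(\<lambda>x. \<Phi>' x (G x)) \<in> borel_measurable (lebesgue_on \<Omega>)"
  proof -
    have "(\<lambda>x. G x $ 1 * \<Phi>' x (axis 1 1) + G x $ 2 * \<Phi>' x (axis 2 1)) \<in> borel_measurable (lebesgue_on \<Omega>)"
      using mc m1 by (intro borel_measurable_add borel_measurable_times) auto
    then show ?thesis by (subst lin2[OF lin]) 
  qed
  have bnd: "\<bar>\<Phi>' x (G x)\<bar> \<le> (l * (k x)^2 + (norm (G x))^2 / l) / 2" if "x \<in> \<Omega>" "l > 0" for x l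
    using k[OF that(1), of "G x"] amgm[OF that(2), of "k x" "norm (G x)"] by linarith
  have fint: "integrable (lebesgue_on \<Omega>) (\<lambda>x. \<Phi>' x (G x))"
  proof (rule Bochner_Integration.integrable_bound[OF _ fm])
    show "integrable (lebesgue_on \<Omega>) (\<lambda>x. (1 * (k x)^2 + (norm (G x))^2 / 1) / 2)"
      using kint Gint by auto
    show "AE x in lebesgue_on \<Omega>. norm (\<Phi>' x (G x)) \<le> norm ((1 * (k x)^2 + (norm (G x))^2 / 1) / 2)"
      using bnd[of _ 1] by (intro AE_I2) (auto simp: space_restrict_space)
  qed
  have key: "L \<le> (l * D + E / l) / 2" if "l > 0" for l
  proof -
    have "L \<le> integral\<^sup>L (lebesgue_on \<Omega>) (\<lambda>x. (l * (k x)^2 + (norm (G x))^2 / l) / 2)"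
      unfolding weq[symmetric]
      by (rule integral_mono[OF fint]) (use kint Gint in \<open>auto simp: space_restrict_space dest!: bnd[OF _ that]\<close>)
    also have "\<dots> = (l * D + E / l) / 2"
      unfolding D_def E_def' using kint Gint by simp
    finally show ?thesis .
  qed
  have L0: "L > 0" using Lpos unfolding L_def .
  have D0: "D \<ge> 0" unfolding D_def by (rule integral_nonneg_AE) auto
  have Dpos: "D > 0"
  proof (rule ccontr)
    assume "\<not> D > 0"
    then have "D = 0" using D0 by simp
    have E0: "E \<ge> 0" unfolding E_def' by (rule integral_nonneg_AE) auto
    have "L \<le> (E / ((E + 1) / L)) / 2" using key[of "(E+1)/L"] L0 E0 \<open>D = 0\<close> by simp
    also have "\<dots> = E * L / (2 * (E + 1))" using L0 E0 by (simp add: field_simps)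
    also have "\<dots> < L"
    proof -
      have "E * L < 2 * (E + 1) * L" using L0 E0 by (simp add: mult_strict_right_mono)
      then show ?thesis using E0 by (simp add: divide_less_eq mult.commute)
    qed
    finally show False by simp
  qed
  have "L \<le> (L / D * D + E / (L / D)) / 2" using key[of "L / D"] L0 Dpos by simp
  then have "L \<le> (L + E * D / L) / 2" using Dpos L0 by (simp add: field_simps)
  then have "L \<le> E * D / L" by simp
  then have "L * L \<le> E * D" using L0 by (simp add: field_simps)
  then have "L^2 / D \<le> E" using Dpos by (simp add: field_simps power2_eq_square)
  then show ?thesis using Dpos unfolding L_def D_def E_def by simp
qed

lemma norm_le_2: "norm (x::real^2) \<le> \<bar>x$1\<bar> + \<bar>x$2\<bar>"
proof -
  have "norm x \<le> (\<Sum>i\<in>UNIV. \<bar>x$i\<bar>)" by (rule norm_le_l1_cart)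
  also have "(\<Sum>i\<in>UNIV. \<bar>x$i\<bar>) = \<bar>x$1\<bar> + \<bar>x$2\<bar>" by (simp add: UNIV_2)
  finally show ?thesis .
qed

lemma C1c_tensor:
  fixes f g f' g' :: "real \<Rightarrow> real"
  assumes df: "\<And>t. (f has_real_derivative f' t) (at t)" and cf: "continuous_on UNIV f'"
    and dg: "\<And>t. (g has_real_derivative g' t) (at t)" and cg: "continuous_on UNIV g'"
    and sf: "\<And>t. a \<le> \<bar>t\<bar> \<Longrightarrow> f t = 0" and sg: "\<And>t. b \<le> \<bar>t\<bar> \<Longrightarrow> g t = 0"
  shows "C1c (\<lambda>x. f (x$1) * g (x$2)) (\<lambda>x v. f' (x$1) * v$1 * g (x$2) + f (x$1) * (g' (x$2) * v$2))"
  unfolding C1c_def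
proof (intro conjI allI)
  fix x :: "real^2"
  have d1: "((\<lambda>x. f (x$1)) has_derivative (\<lambda>v. v$1 * f' (x$1))) (at x)"
    by (rule DERIV_compose_FDERIV[OF df bounded_linear_imp_has_derivative[OF bounded_linear_vec_nth]])
  have d2: "((\<lambda>x. g (x$2)) has_derivative (\<lambda>v. v$2 * g' (x$2))) (at x)"
    by (rule DERIV_compose_FDERIV[OF dg bounded_linear_imp_has_derivative[OF bounded_linear_vec_nth]])
  have "((\<lambda>x. f (x$1) * g (x$2)) has_derivative (\<lambda>v. f (x$1) * (v$2 * g' (x$2)) + v$1 * f' (x$1) * g (x$2))) (at x)"
    by (rule has_derivative_mult[OF d1 d2])
  then show "((\<lambda>x. f (x$1) * g (x$2)) has_derivative (\<lambda>v. f' (x$1) * v$1 * g (x$2) + f (x$1) * (g' (x$2) * v$2))) (at x)"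
    by (simp add: algebra_simps)
next
  fix v :: "real^2"
  have cf0: "continuous_on UNIV f" using df by (meson DERIV_continuous continuous_at_imp_continuous_on)
  have cg0: "continuous_on UNIV g" using dg by (meson DERIV_continuous continuous_at_imp_continuous_on)
  show "continuous_on UNIV (\<lambda>x. f' (x$1) * v$1 * g (x$2) + f (x$1) * (g' (x$2) * v$2))"
    by (intro continuous_intros continuous_on_compose2[OF cf] continuous_on_compose2[OF cg]
        continuous_on_compose2[OF cf0] continuous_on_compose2[OF cg0]) auto
next
  have "bounded {x::real^2. f (x$1) * g (x$2) \<noteq> 0}"
    unfolding bounded_iff
  proof (intro exI ballI)
    fix x :: "real^2" assume "x \<in> {x. f (x$1) * g (x$2) \<noteq> 0}"
    then have "\<bar>x$1\<bar> < a" "\<bar>x$2\<bar> < b" using sf sg by (force simp: not_less)+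
    then show "norm x \<le> a + b" using norm_le_2[of x] by linarith
  qed
  then show "compact (closure {x::real^2. f (x$1) * g (x$2) \<noteq> 0})" by simp
qed

lemma box2_meas: assumes "a1 \<le> b1" "a2 \<le> b2"
  shows "measure lebesgue (cbox (vector [a1, a2]) (vector [b1, b2]) :: (real^2) set) = (b1 - a1) * (b2 - a2)"
proof -
  have ne: "cbox (vector [a1, a2]) (vector [b1, b2]) \<noteq> ({} :: (real^2) set)"
    using assms by (simp add: interval_ne_empty_cart forall_2)
  have "Henstock_Kurzweil_Integration.content (cbox (vector [a1, a2]) (vector [b1, b2]) :: (real^2) set) = (b1 - a1) * (b2 - a2)"
    using content_cbox_cart[OF ne] by (simp add: UNIV_2)
  then show ?thesis by simp
qed

lemma closed_leb: "closed S \<Longrightarrow> S \<in> sets lebesgue"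
  by (metis borel_closed sets_completionI_sets sets_lborel)
lemma open_leb: "open S \<Longrightarrow> S \<in> sets lebesgue"
  by (metis borel_open sets_completionI_sets sets_lborel)

lemma compact_S_eps: "compact S0 \<Longrightarrow> compact (S_eps S0 e)"
  unfolding S_eps_def by (intro compact_continuous_image continuous_intros)

lemma e2_nth[simp]: "e2 $ 1 = 0" "e2 $ 2 = 1"
  by (auto simp: e2_def axis_def)

lemma mem_box2: "(x::real^2) \<in> cbox (vector [a1, a2]) (vector [b1, b2]) \<longleftrightarrow>
   a1 \<le> x$1 \<and> x$1 \<le> b1 \<and> a2 \<le> x$2 \<and> x$2 \<le> b2"
  by (auto simp: mem_box_cart forall_2)

lemma TT_scale_deriv: "c > 0 \<Longrightarrow> ((\<lambda>t. TT (t / c)) has_real_derivative TT' (t / c) / c) (at t)"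
proof -
  assume "c > 0"
  have "((\<lambda>t. t / c) has_real_derivative 1 / c) (at t)" using \<open>c > 0\<close> by (auto intro!: derivative_eq_intros)
  from DERIV_chain2[OF TT_deriv this] show ?thesis by simp
qed

lemma TT_scale_cont: "continuous_on UNIV (\<lambda>t. TT' (t / c) / c)"
proof -
  have "continuous_on UNIV (\<lambda>t. TT' (t * (1/c)) * (1/c))"
    by (intro continuous_intros continuous_on_compose2[OF TT'_cont]) auto
  then show ?thesis by simp
qed

lemma TT_cont: "continuous_on UNIV TT"
  using TT_deriv by (meson DERIV_continuous continuous_at_imp_continuous_on)

lemma local_est:
  fixes C S0 :: "(real^2) set" and \<epsilon> ll H g r :: real and f :: "real \<Rightarrow> real"
  assumes ws: "weak_neumann_sol C S0 \<epsilon> U G"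
    and bC: "bounded C" and oC: "open C" and cS: "compact S0"
    and SC: "S_eps S0 \<epsilon> \<subseteq> C"
    and hr: "\<And>x. x \<in> ball 0 r \<Longrightarrow> x \<in> C \<longleftrightarrow> 0 < x$2"
    and loc: "\<And>x. x \<in> ball 0 r \<Longrightarrow> x \<in> C - S_eps S0 \<epsilon> \<longleftrightarrow> (0 < x$2 \<and> x$2 < f (x$1) + \<epsilon>)"
    and l0: "ll > 0" and H0: "H > 0" and lHr: "2 * ll + 2 * H \<le> r"
    and gap: "\<And>t. \<bar>t\<bar> \<le> 2 * ll \<Longrightarrow> f t + \<epsilon> \<le> g" and gH: "g \<le> H" and g0: "0 < g"
  shows "ll^3 / (512 * g) \<le> energy (Omega_eps C S0 \<epsilon>) G"
proof -
  define \<Omega> where "\<Omega> = Omega_eps C S0 \<epsilon>"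
  define Sm where "Sm = S_eps S0 \<epsilon> \<inter> {x::real^2. x$1 < 0}"
  define \<Phi> where "\<Phi> = (\<lambda>x::real^2. TT (x$1 / ll) * TT (x$2 / H))"
  define \<Phi>' where "\<Phi>' = (\<lambda>(x::real^2) (v::real^2). TT' (x$1 / ll) / ll * v$1 * TT (x$2 / H) + TT (x$1 / ll) * (TT' (x$2 / H) / H * v$2))"
  define k where "k = (\<lambda>x::real^2. \<bar>TT' (x$1 / ll) / ll * TT (x$2 / H)\<bar> + \<bar>TT (x$1 / ll) * (TT' (x$2 / H) / H)\<bar>)"
  note T = TT_props
  have C1: "C1c \<Phi> \<Phi>'"
    unfolding \<Phi>_def \<Phi>'_def
  proof (rule C1c_tensor[OF TT_scale_deriv[OF l0] TT_scale_cont TT_scale_deriv[OF H0] TT_scale_cont])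
    show "TT (t / ll) = 0" if "2 * ll \<le> \<bar>t\<bar>" for t
      using T(4)[of "t/ll"] that l0 by (simp add: abs_div le_divide_eq)
    show "TT (t / H) = 0" if "2 * H \<le> \<bar>t\<bar>" for t
      using T(4)[of "t/H"] that H0 by (simp add: abs_div le_divide_eq)
  qed
  have SEc: "compact (S_eps S0 \<epsilon>)" by (rule compact_S_eps[OF cS])
  have \<Omega>o: "open \<Omega>" unfolding \<Omega>_def Omega_eps_def
    by (intro open_Int open_Diff oC compact_imp_closed SEc open_halfspace_component_lt_cart)
  have \<Omega>C: "\<Omega> \<subseteq> C" unfolding \<Omega>_def Omega_eps_def by auto
  have \<Omega>L: "\<Omega> \<in> lmeasurable"
    by (rule bounded_set_imp_lmeasurable[OF bounded_subset[OF bC \<Omega>C] open_leb[OF \<Omega>o]])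
  have \<Omega>m: "\<Omega> \<in> sets lebesgue" using \<Omega>L by auto
  have SmC: "Sm \<subseteq> C" unfolding Sm_def using SC by auto
  have Smm: "Sm \<in> sets lebesgue" unfolding Sm_def
    by (intro sets.Int closed_leb compact_imp_closed SEc open_leb open_halfspace_component_lt_cart)
  have SmL: "Sm \<in> lmeasurable" by (rule bounded_set_imp_lmeasurable[OF bounded_subset[OF bC SmC] Smm])
  have supp: "TT (x$1 / ll) = 0 \<and> TT' (x$1 / ll) = 0 \<or> TT (x$2 / H) = 0 \<and> TT' (x$2 / H) = 0 \<or> x \<in> ball 0 r \<and> \<bar>x$1\<bar> < 2 * ll"
    for x :: "real^2"
  proof (cases "2 * ll \<le> \<bar>x$1\<bar>")
    case True
    then have "2 \<le> \<bar>x$1 / ll\<bar>" using l0 by (simp add: abs_div le_divide_eq)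
    then show ?thesis using T(4,6) by blast
  next
    case f1: False
    show ?thesis
    proof (cases "2 * H \<le> \<bar>x$2\<bar>")
      case True
      then have "2 \<le> \<bar>x$2 / H\<bar>" using H0 by (simp add: abs_div le_divide_eq)
      then show ?thesis using T(4,6) by blast
    next
      case False
      then have "norm x < r" using f1 norm_le_2[of x] lHr by linarith
      then show ?thesis using f1 by simp
    qed
  qed
  have kb: "\<bar>\<Phi>' x v\<bar> \<le> k x * norm v" for x v
  proof -
    define a where "a = TT' (x$1 / ll) / ll * TT (x$2 / H)"
    define b where "b = TT (x$1 / ll) * (TT' (x$2 / H) / H)"
    have "\<Phi>' x v = a * v$1 + b * v$2" unfolding \<Phi>'_def a_def b_def by (simp add: algebra_simps)
    then have "\<bar>\<Phi>' x v\<bar> \<le> \<bar>a\<bar> * \<bar>v$1\<bar> + \<bar>b\<bar> * \<bar>v$2\<bar>"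
      by (metis abs_mult abs_triangle_ineq)
    also have "\<dots> \<le> \<bar>a\<bar> * norm v + \<bar>b\<bar> * norm v"
      by (intro add_mono mult_left_mono component_le_norm_cart) auto
    finally show ?thesis unfolding k_def a_def b_def by (simp add: algebra_simps)
  qed
  have kcont: "continuous_on UNIV k"
    unfolding k_def
    by (intro continuous_intros continuous_on_compose2[OF TT'_cont] continuous_on_compose2[OF TT_cont]) (use l0 H0 in auto)
  have kbound: "\<bar>k x\<bar> \<le> 4 / ll + 4 / H" for x
  proof -
    have "\<bar>TT' (x$1 / ll) / ll * TT (x$2 / H)\<bar> = (\<bar>TT' (x$1 / ll)\<bar> / ll) * TT (x$2 / H)"
      using T(1)[of "x$2/H"] l0 by (simp add: abs_mult)
    also have "\<dots> \<le> (4 / ll) * 1"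
      using T(1,2)[of "x$2/H"] T(7)[of "x$1/ll"] l0 by (intro mult_mono divide_right_mono) auto
    finally have 1: "\<bar>TT' (x$1 / ll) / ll * TT (x$2 / H)\<bar> \<le> 4 / ll" by simp
    have "\<bar>TT (x$1 / ll) * (TT' (x$2 / H) / H)\<bar> = TT (x$1 / ll) * (\<bar>TT' (x$2 / H)\<bar> / H)"
      using T(1)[of "x$1/ll"] H0 by (simp add: abs_mult)
    also have "\<dots> \<le> 1 * (4 / H)"
      using T(1,2)[of "x$1/ll"] T(7)[of "x$2/H"] H0 by (intro mult_mono divide_right_mono) auto
    finally have 2: "\<bar>TT (x$1 / ll) * (TT' (x$2 / H) / H)\<bar> \<le> 4 / H" by simp
    show ?thesis using 1 2 unfolding k_def by simp
  qed
  have kint: "integrable (lebesgue_on \<Omega>) (\<lambda>x. (k x)^2)"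
  proof -
    interpret finite_measure "lebesgue_on \<Omega>" by (rule finite_measure_lebesgue_on[OF \<Omega>L])
    show ?thesis
    proof (rule integrable_const_bound[where B="(4 / ll + 4 / H)^2"])
      show "AE x in lebesgue_on \<Omega>. norm ((k x)^2) \<le> (4 / ll + 4 / H)^2"
      proof (intro AE_I2)
        fix x
        have "\<bar>k x\<bar>^2 \<le> (4 / ll + 4 / H)^2" by (rule power_mono[OF kbound abs_ge_zero])
        then show "norm ((k x)^2) \<le> (4 / ll + 4 / H)^2" by simp
      qed
      show "(\<lambda>x. (k x)^2) \<in> borel_measurable (lebesgue_on \<Omega>)"
        by (intro continuous_imp_measurable_on_sets_lebesgue[OF _ \<Omega>m] continuous_intros continuous_on_subset[OF kcont]) auto
    qed
  qed
  define Box where "Box = (cbox (vector [-2*ll, 0]) (vector [0, g]) :: (real^2) set)"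
  define Rect where "Rect = (cbox (vector [-ll, 5*H/4]) (vector [-ll/2, 7*H/4]) :: (real^2) set)"
  have kO: "(k x)^2 \<le> (16 / ll^2) * indicator Box x" if xO: "x \<in> \<Omega>" for x
  proof -
    consider "TT (x$1 / ll) = 0 \<and> TT' (x$1 / ll) = 0" | "TT (x$2 / H) = 0 \<and> TT' (x$2 / H) = 0"
      | "x \<in> ball 0 r \<and> \<bar>x$1\<bar> < 2 * ll" using supp[of x] by blast
    then show ?thesis
    proof cases
      case 3
      have xx: "x \<in> C - S_eps S0 \<epsilon>" "x$1 < 0" using xO unfolding \<Omega>_def Omega_eps_def by auto
      have x2: "0 < x$2" "x$2 < f (x$1) + \<epsilon>" using loc[of x] 3 xx by auto
      have "f (x$1) + \<epsilon> \<le> g" using gap 3 by auto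
      then have x2g: "x$2 \<le> g" using x2 by linarith
      have inB: "x \<in> Box" unfolding Box_def mem_box2 using 3 xx x2 x2g by auto
      have "\<bar>x$2 / H\<bar> \<le> 1" using x2 x2g gH H0 by (simp add: abs_div divide_le_eq)
      then have t: "TT (x$2 / H) = 1" "TT' (x$2 / H) = 0" using T(3,5) by auto
      have "\<bar>k x\<bar> = \<bar>TT' (x$1 / ll)\<bar> / ll" unfolding k_def t using l0 by (simp add: abs_div)
      also have "\<dots> \<le> 4 / ll" using T(7)[of "x$1/ll"] l0 by (simp add: divide_right_mono)
      finally have "\<bar>k x\<bar>^2 \<le> (4/ll)^2" by (intro power_mono) auto
      then show ?thesis using inB by (simp add: power_divide)
    qed (auto simp: k_def)
  qed
  have pos1: "(1 / H) * indicator Rect x \<le> - \<Phi>' x e2" if xS: "x \<in> Sm" for x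
  proof (cases "x \<in> Rect")
    case True
    then have r1: "-ll \<le> x$1" "x$1 \<le> -ll/2" "5*H/4 \<le> x$2" "x$2 \<le> 7*H/4" unfolding Rect_def mem_box2 by auto
    have "\<bar>x$1\<bar> \<le> ll" using r1 l0 by auto
    then have "\<bar>x$1 / ll\<bar> \<le> 1" using l0 by (simp add: abs_div divide_le_eq)
    then have a: "TT (x$1 / ll) = 1" using T(3) by auto
    have "TT' (x$2 / H) \<le> -1" using r1 H0 by (intro T(9)) (simp_all add: le_divide_eq divide_le_eq)
    then have "1 / H \<le> - (TT' (x$2 / H) / H)" using H0 divide_right_mono[of 1 "- TT' (x$2 / H)" H] by simp
    then show ?thesis using True a unfolding \<Phi>'_def by simp
  next
    case False
    consider "TT (x$1 / ll) = 0 \<and> TT' (x$1 / ll) = 0" | "TT (x$2 / H) = 0 \<and> TT' (x$2 / H) = 0"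
      | "x \<in> ball 0 r \<and> \<bar>x$1\<bar> < 2 * ll" using supp[of x] by blast
    then show ?thesis
    proof cases
      case 3
      have "x \<in> C" using xS SmC by auto
      then have "0 < x$2" using hr 3 by auto
      then have "TT' (x$2 / H) \<le> 0" using H0 by (intro T(8)) simp
      then have "TT (x$1 / ll) * (TT' (x$2 / H) / H) \<le> 0" using T(1)[of "x$1/ll"] H0
        by (simp add: mult_nonneg_nonpos divide_nonpos_pos)
      then show ?thesis using False unfolding \<Phi>'_def by simp
    qed (use False in \<open>auto simp: \<Phi>'_def\<close>)
  qed
  have RectS: "Rect \<subseteq> Sm"
  proof
    fix x assume "x \<in> Rect"
    then have r1: "-ll \<le> x$1" "x$1 \<le> -ll/2" "5*H/4 \<le> x$2" "x$2 \<le> 7*H/4" unfolding Rect_def mem_box2 by auto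
    have "norm x \<le> \<bar>x$1\<bar> + \<bar>x$2\<bar>" by (rule norm_le_2)
    also have "\<dots> < r" using r1 l0 H0 lHr by auto
    finally have xb: "x \<in> ball 0 r" by simp
    have "x \<in> C" using hr[OF xb] r1 H0 by auto
    moreover have "f (x$1) + \<epsilon> \<le> g" using gap r1 l0 by auto
    then have "\<not> (x \<in> C - S_eps S0 \<epsilon>)" using loc[OF xb] r1 gH H0 by auto
    ultimately show "x \<in> Sm" unfolding Sm_def using r1 l0 by auto
  qed
  have Rmeas: "measure lebesgue Rect = ll * H / 4" unfolding Rect_def using l0 H0
    by (subst box2_meas) (auto simp: field_simps)
  have Bmeas: "measure lebesgue Box = 2 * ll * g" unfolding Box_def using l0 g0
    by (subst box2_meas) (auto simp: field_simps)
  have Lb: "ll / 4 \<le> - integral\<^sup>L (lebesgue_on Sm) (\<lambda>x. \<Phi>' x e2)"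
  proof -
    interpret finite_measure "lebesgue_on Sm" by (rule finite_measure_lebesgue_on[OF SmL])
    have cf: "continuous_on UNIV (\<lambda>x. \<Phi>' x e2)" using C1 unfolding C1c_def by auto
    have i1: "integrable (lebesgue_on Sm) (\<lambda>x. - \<Phi>' x e2)"
    proof (rule integrable_const_bound[where B="4 / H"])
      show "AE x in lebesgue_on Sm. norm (- \<Phi>' x e2) \<le> 4 / H"
      proof (intro AE_I2)
        fix x :: "real^2"
        have "\<bar>TT (x$1 / ll) * (TT' (x$2 / H) / H)\<bar> = TT (x$1 / ll) * (\<bar>TT' (x$2 / H)\<bar> / H)"
          using T(1)[of "x$1/ll"] H0 by (simp add: abs_mult)
        also have "\<dots> \<le> 1 * (4 / H)"
          using T(1,2)[of "x$1/ll"] T(7)[of "x$2/H"] H0 by (intro mult_mono divide_right_mono) auto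
        finally show "norm (- \<Phi>' x e2) \<le> 4 / H" unfolding \<Phi>'_def by simp
      qed
      show "(\<lambda>x. - \<Phi>' x e2) \<in> borel_measurable (lebesgue_on Sm)"
        by (intro continuous_imp_measurable_on_sets_lebesgue[OF _ Smm] continuous_intros continuous_on_subset[OF cf]) auto
    qed
    have i2: "integrable (lebesgue_on Sm) (\<lambda>x. (1 / H) * indicator Rect x)"
    proof (rule integrable_const_bound[where B="1 / H"])
      show "AE x in lebesgue_on Sm. norm ((1 / H) * indicator Rect x) \<le> 1 / H"
        using H0 by (intro AE_I2) (simp add: indicator_def)
      have "Rect \<in> sets lebesgue" unfolding Rect_def by simp
      then show "(\<lambda>x. (1 / H) * indicator Rect x) \<in> borel_measurable (lebesgue_on Sm)"
        by (intro borel_measurable_times borel_measurable_const measurable_restrict_space1 borel_measurable_indicator)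
    qed
    have "integral\<^sup>L (lebesgue_on Sm) (\<lambda>x. (1 / H) * indicator Rect x) \<le> integral\<^sup>L (lebesgue_on Sm) (\<lambda>x. - \<Phi>' x e2)"
      by (rule integral_mono[OF i2 i1]) (use pos1 in \<open>auto simp: space_restrict_space\<close>)
    moreover have "integral\<^sup>L (lebesgue_on Sm) (\<lambda>x. (1 / H) * indicator Rect x) = (1 / H) * measure lebesgue Rect"
    proof -
      have "integral\<^sup>L (lebesgue_on Sm) (\<lambda>x. (1 / H) * indicator Rect x) = (1 / H) * measure (lebesgue_on Sm) (Rect \<inter> space (lebesgue_on Sm))"
        by simp
      also have "Rect \<inter> space (lebesgue_on Sm) = Rect" using RectS by (auto simp: space_restrict_space)
      also have "measure (lebesgue_on Sm) Rect = measure lebesgue Rect"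
        by (rule measure_restrict_space) (use Smm RectS in auto)
      finally show ?thesis .
    qed
    ultimately have X: "(1 / H) * measure lebesgue Rect \<le> integral\<^sup>L (lebesgue_on Sm) (\<lambda>x. - \<Phi>' x e2)"
      by linarith
    have Y: "(1 / H) * measure lebesgue Rect = ll / 4" using Rmeas H0 by simp
    have Z: "integral\<^sup>L (lebesgue_on Sm) (\<lambda>x. - \<Phi>' x e2) = - integral\<^sup>L (lebesgue_on Sm) (\<lambda>x. \<Phi>' x e2)"
      by (rule integral_minus)
    show ?thesis using X Y Z by linarith
  qed
  have lbE: "0 < integral\<^sup>L (lebesgue_on \<Omega>) (\<lambda>x. (k x)^2) \<and>
     (- integral\<^sup>L (lebesgue_on Sm) (\<lambda>x. \<Phi>' x e2))^2 / integral\<^sup>L (lebesgue_on \<Omega>) (\<lambda>x. (k x)^2) \<le> energy \<Omega> G"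
    unfolding Sm_def \<Omega>_def
  proof (rule energy_lb[OF ws C1])
    show "Omega_eps C S0 \<epsilon> \<in> sets lebesgue" using \<Omega>m unfolding \<Omega>_def .
    show "\<bar>\<Phi>' x v\<bar> \<le> k x * norm v" for x v by (rule kb)
    show "integrable (lebesgue_on (Omega_eps C S0 \<epsilon>)) (\<lambda>x. (k x)^2)" using kint unfolding \<Omega>_def .
    show "0 < - integral\<^sup>L (lebesgue_on (S_eps S0 \<epsilon> \<inter> {x. x $ 1 < 0})) (\<lambda>x. \<Phi>' x e2)"
      using Lb l0 unfolding Sm_def by linarith
  qed
  have Db: "integral\<^sup>L (lebesgue_on \<Omega>) (\<lambda>x. (k x)^2) \<le> 32 * g / ll"
  proof -
    interpret finite_measure "lebesgue_on \<Omega>" by (rule finite_measure_lebesgue_on[OF \<Omega>L])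
    have BL: "Box \<in> sets lebesgue" unfolding Box_def by simp
    have i2: "integrable (lebesgue_on \<Omega>) (\<lambda>x. (16 / ll^2) * indicator Box x)"
    proof (rule integrable_const_bound[where B="16 / ll^2"])
      show "AE x in lebesgue_on \<Omega>. norm ((16 / ll^2) * indicator Box x) \<le> 16 / ll^2"
        by (intro AE_I2) (simp add: indicator_def)
      show "(\<lambda>x. (16 / ll^2) * indicator Box x) \<in> borel_measurable (lebesgue_on \<Omega>)"
        using BL by (intro borel_measurable_times borel_measurable_const measurable_restrict_space1 borel_measurable_indicator)
    qed
    have "integral\<^sup>L (lebesgue_on \<Omega>) (\<lambda>x. (k x)^2) \<le> integral\<^sup>L (lebesgue_on \<Omega>) (\<lambda>x. (16 / ll^2) * indicator Box x)"
      by (rule integral_mono[OF kint i2]) (use kO in \<open>auto simp: space_restrict_space\<close>)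
    also have "\<dots> = (16 / ll^2) * measure lebesgue (Box \<inter> \<Omega>)"
    proof -
      have "integral\<^sup>L (lebesgue_on \<Omega>) (\<lambda>x. (16 / ll^2) * indicator Box x) = (16 / ll^2) * measure (lebesgue_on \<Omega>) (Box \<inter> space (lebesgue_on \<Omega>))"
        by simp
      also have "Box \<inter> space (lebesgue_on \<Omega>) = Box \<inter> \<Omega>" by (auto simp: space_restrict_space)
      also have "measure (lebesgue_on \<Omega>) (Box \<inter> \<Omega>) = measure lebesgue (Box \<inter> \<Omega>)"
        by (rule measure_restrict_space) (use \<Omega>m in auto)
      finally show ?thesis .
    qed
    also have "\<dots> \<le> (16 / ll^2) * measure lebesgue Box"
      by (intro mult_left_mono measure_mono_fmeasurable) (use BL \<Omega>m in \<open>auto simp: Box_def\<close>)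
    also have "\<dots> = 32 * g / ll" using Bmeas l0 by (simp add: power2_eq_square field_simps)
    finally show ?thesis .
  qed
  define L where "L = - integral\<^sup>L (lebesgue_on Sm) (\<lambda>x. \<Phi>' x e2)"
  define D where "D = integral\<^sup>L (lebesgue_on \<Omega>) (\<lambda>x. (k x)^2)"
  have D0: "0 < D" and LDE: "L^2 / D \<le> energy \<Omega> G" using lbE unfolding L_def D_def by auto
  have L4: "ll / 4 \<le> L" using Lb unfolding L_def .
  have "ll^3 / (512 * g) = (ll/4)^2 / (32 * g / ll)" using l0 g0 by (simp add: field_simps power2_eq_square power3_eq_cube)
  also have "\<dots> \<le> L^2 / D"
    by (rule frac_le) (use L4 l0 D0 Db[folded D_def] in \<open>auto intro: power_mono\<close>)
  also have "\<dots> \<le> energy \<Omega> G" by (rule LDE)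
  finally show ?thesis unfolding \<Omega>_def .
qed

lemma S_eps_half_translate:
  "S_eps S0 e \<inter> {x::real^2. x$1 < 0} = (+) (e *\<^sub>R e2) ` (S0 \<inter> {x. x$1 < 0})"
  unfolding S_eps_def by (auto simp: image_iff add.commute)

lemma meas_S_eps_half:
  "measure lebesgue (S_eps S0 e \<inter> {x::real^2. x$1 < 0}) = measure lebesgue (S0 \<inter> {x. x$1 < 0})"
  unfolding S_eps_half_translate by (rule measure_translation)

lemma global_est:
  fixes C S0 :: "(real^2) set" and \<epsilon> :: real
  assumes ws: "weak_neumann_sol C S0 \<epsilon> U G"
    and bC: "bounded C" and oC: "open C" and cS: "compact S0"
    and SC: "S_eps S0 \<epsilon> \<subseteq> C"
    and mpos: "0 < measure lebesgue (S0 \<inter> {x. x$1 < 0})"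
  shows "(measure lebesgue (S0 \<inter> {x. x$1 < 0}))^2 / measure lebesgue C \<le> energy (Omega_eps C S0 \<epsilon>) G"
proof -
  obtain B where B: "B > 0" "\<And>x. x \<in> C \<Longrightarrow> norm x \<le> B" using bC bounded_pos by blast
  define A where "A = B + 1"
  have A0: "A > 0" unfolding A_def using B by simp
  have xA: "\<bar>x$i\<bar> < A" if "x \<in> C" for x i
    using B(2)[OF that] component_le_norm_cart[of x i] unfolding A_def by linarith
  define \<Omega> where "\<Omega> = Omega_eps C S0 \<epsilon>"
  define Sm where "Sm = S_eps S0 \<epsilon> \<inter> {x::real^2. x$1 < 0}"
  define \<Phi> where "\<Phi> = (\<lambda>x::real^2. TT (x$1 / A) * (- (x$2 * TT (x$2 / A))))"
  define \<Phi>' where "\<Phi>' = (\<lambda>(x::real^2) (v::real^2). TT' (x$1 / A) / A * v$1 * (- (x$2 * TT (x$2 / A)))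
      + TT (x$1 / A) * ((- (TT (x$2 / A) + x$2 * (TT' (x$2 / A) / A))) * v$2))"
  note T = TT_props
  have dg: "((\<lambda>t. - (t * TT (t / A))) has_real_derivative - (TT (t / A) + t * (TT' (t / A) / A))) (at t)" for t
  proof -
    have "((\<lambda>t. t * TT (t / A)) has_real_derivative 1 * TT (t / A) + TT' (t / A) / A * t) (at t)"
      by (rule DERIV_mult[OF DERIV_ident TT_scale_deriv[OF A0]])
    from DERIV_minus[OF this] show ?thesis by (simp add: algebra_simps)
  qed
  have cg: "continuous_on UNIV (\<lambda>t. - (TT (t / A) + t * (TT' (t / A) / A)))"
  proof -
    have "continuous_on UNIV (\<lambda>t. - (TT (t * (1/A)) + t * (TT' (t * (1/A)) * (1/A))))"
      by (intro continuous_intros continuous_on_compose2[OF TT'_cont] continuous_on_compose2[OF TT_cont]) auto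
    then show ?thesis by simp
  qed
  have C1: "C1c \<Phi> \<Phi>'"
    unfolding \<Phi>_def \<Phi>'_def
  proof (rule C1c_tensor[OF TT_scale_deriv[OF A0] TT_scale_cont dg cg])
    show "TT (t / A) = 0" if "2 * A \<le> \<bar>t\<bar>" for t
      using T(4)[of "t/A"] that A0 by (simp add: abs_div le_divide_eq)
    show "- (t * TT (t / A)) = 0" if "2 * A \<le> \<bar>t\<bar>" for t
      using T(4)[of "t/A"] that A0 by (simp add: abs_div le_divide_eq)
  qed
  have onC: "\<Phi>' x v = - v$2" if "x \<in> C" for x v
  proof -
    have "\<bar>x$1\<bar> \<le> A" "\<bar>x$2\<bar> \<le> A" using xA[OF that, of 1] xA[OF that, of 2] by auto
    then have "\<bar>x$1 / A\<bar> \<le> 1" "\<bar>x$2 / A\<bar> \<le> 1" using A0 by (simp_all add: abs_div divide_le_eq)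
    then show ?thesis unfolding \<Phi>'_def using T(3,5) by simp
  qed
  have SEc: "compact (S_eps S0 \<epsilon>)" by (rule compact_S_eps[OF cS])
  have \<Omega>o: "open \<Omega>" unfolding \<Omega>_def Omega_eps_def
    by (intro open_Int open_Diff oC compact_imp_closed SEc open_halfspace_component_lt_cart)
  have \<Omega>C: "\<Omega> \<subseteq> C" unfolding \<Omega>_def Omega_eps_def by auto
  have \<Omega>L: "\<Omega> \<in> lmeasurable"
    by (rule bounded_set_imp_lmeasurable[OF bounded_subset[OF bC \<Omega>C] open_leb[OF \<Omega>o]])
  have \<Omega>m: "\<Omega> \<in> sets lebesgue" using \<Omega>L by auto
  have CL: "C \<in> lmeasurable" by (rule lmeasurable_open[OF bC oC])
  have SmC: "Sm \<subseteq> C" unfolding Sm_def using SC by auto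
  have Smm: "Sm \<in> sets lebesgue" unfolding Sm_def
    by (intro sets.Int closed_leb compact_imp_closed SEc open_leb open_halfspace_component_lt_cart)
  have kint: "integrable (lebesgue_on \<Omega>) (\<lambda>x. (1::real)^2)"
  proof -
    interpret finite_measure "lebesgue_on \<Omega>" by (rule finite_measure_lebesgue_on[OF \<Omega>L])
    show ?thesis by simp
  qed
  have Lval: "- integral\<^sup>L (lebesgue_on Sm) (\<lambda>x. \<Phi>' x e2) = measure lebesgue Sm"
  proof -
    have "integral\<^sup>L (lebesgue_on Sm) (\<lambda>x. \<Phi>' x e2) = integral\<^sup>L (lebesgue_on Sm) (\<lambda>x. -1)"
      by (rule Bochner_Integration.integral_cong) (use SmC onC in \<open>auto simp: space_restrict_space\<close>)
    also have "\<dots> = - measure (lebesgue_on Sm) Sm" by (simp add: space_restrict_space)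
    also have "measure (lebesgue_on Sm) Sm = measure lebesgue Sm"
      by (rule measure_restrict_space) (use Smm in auto)
    finally show ?thesis by simp
  qed
  have mS: "measure lebesgue Sm = measure lebesgue (S0 \<inter> {x. x$1 < 0})"
    unfolding Sm_def by (rule meas_S_eps_half)
  have lbE: "0 < integral\<^sup>L (lebesgue_on \<Omega>) (\<lambda>x. (1::real)^2) \<and>
     (- integral\<^sup>L (lebesgue_on Sm) (\<lambda>x. \<Phi>' x e2))^2 / integral\<^sup>L (lebesgue_on \<Omega>) (\<lambda>x. (1::real)^2) \<le> energy \<Omega> G"
    unfolding Sm_def \<Omega>_def
  proof (rule energy_lb[OF ws C1])
    show "Omega_eps C S0 \<epsilon> \<in> sets lebesgue" using \<Omega>m unfolding \<Omega>_def .
    show "\<bar>\<Phi>' x v\<bar> \<le> 1 * norm v" if "x \<in> Omega_eps C S0 \<epsilon>" for x v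
      using onC[of x v] that \<Omega>C component_le_norm_cart[of v 2] unfolding \<Omega>_def by auto
    show "integrable (lebesgue_on (Omega_eps C S0 \<epsilon>)) (\<lambda>x. (1::real)^2)" using kint unfolding \<Omega>_def .
    show "0 < - integral\<^sup>L (lebesgue_on (S_eps S0 \<epsilon> \<inter> {x. x $ 1 < 0})) (\<lambda>x. \<Phi>' x e2)"
      using Lval mS mpos unfolding Sm_def by simp
  qed
  have Dv: "integral\<^sup>L (lebesgue_on \<Omega>) (\<lambda>x. (1::real)^2) = measure lebesgue \<Omega>"
  proof -
    have "integral\<^sup>L (lebesgue_on \<Omega>) (\<lambda>x. (1::real)^2) = measure (lebesgue_on \<Omega>) \<Omega>"
      by (simp add: space_restrict_space)
    also have "\<dots> = measure lebesgue \<Omega>" by (rule measure_restrict_space) (use \<Omega>m in auto)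
    finally show ?thesis .
  qed
  have DC: "measure lebesgue \<Omega> \<le> measure lebesgue C"
    by (rule measure_mono_fmeasurable[OF \<Omega>C \<Omega>m CL])
  have "(measure lebesgue (S0 \<inter> {x. x$1 < 0}))^2 / measure lebesgue C
        \<le> (measure lebesgue (S0 \<inter> {x. x$1 < 0}))^2 / measure lebesgue \<Omega>"
    using lbE Dv DC by (intro divide_left_mono) auto
  also have "\<dots> \<le> energy \<Omega> G" using lbE Dv Lval mS by simp
  finally show ?thesis unfolding \<Omega>_def .
qed

lemma pos_meas:
  fixes C S0 :: "(real^2) set" and \<epsilon> ll H g r :: real and f :: "real \<Rightarrow> real"
  assumes bC: "bounded C" and cS: "compact S0"
    and SC: "S_eps S0 \<epsilon> \<subseteq> C"
    and hr: "\<And>x. x \<in> ball 0 r \<Longrightarrow> x \<in> C \<longleftrightarrow> 0 < x$2"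
    and loc: "\<And>x. x \<in> ball 0 r \<Longrightarrow> x \<in> C - S_eps S0 \<epsilon> \<longleftrightarrow> (0 < x$2 \<and> x$2 < f (x$1) + \<epsilon>)"
    and l0: "ll > 0" and H0: "H > 0" and lHr: "2 * ll + 2 * H \<le> r"
    and gap: "\<And>t. \<bar>t\<bar> \<le> 2 * ll \<Longrightarrow> f t + \<epsilon> \<le> g" and gH: "g \<le> H"
  shows "0 < measure lebesgue (S0 \<inter> {x. x$1 < 0})"
proof -
  define Sm where "Sm = S_eps S0 \<epsilon> \<inter> {x::real^2. x$1 < 0}"
  define Rect where "Rect = (cbox (vector [-ll, 5*H/4]) (vector [-ll/2, 7*H/4]) :: (real^2) set)"
  have SEc: "compact (S_eps S0 \<epsilon>)" by (rule compact_S_eps[OF cS])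
  have SmC: "Sm \<subseteq> C" unfolding Sm_def using SC by auto
  have Smm: "Sm \<in> sets lebesgue" unfolding Sm_def
    by (intro sets.Int closed_leb compact_imp_closed SEc open_leb open_halfspace_component_lt_cart)
  have SmL: "Sm \<in> lmeasurable" by (rule bounded_set_imp_lmeasurable[OF bounded_subset[OF bC SmC] Smm])
  have RectS: "Rect \<subseteq> Sm"
  proof
    fix x assume "x \<in> Rect"
    then have r1: "-ll \<le> x$1" "x$1 \<le> -ll/2" "5*H/4 \<le> x$2" "x$2 \<le> 7*H/4" unfolding Rect_def mem_box2 by auto
    have "norm x \<le> \<bar>x$1\<bar> + \<bar>x$2\<bar>" by (rule norm_le_2)
    also have "\<dots> < r" using r1 l0 H0 lHr by auto
    finally have xb: "x \<in> ball 0 r" by simp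
    have "x \<in> C" using hr[OF xb] r1 H0 by auto
    moreover have "f (x$1) + \<epsilon> \<le> g" using gap r1 l0 by auto
    then have "\<not> (x \<in> C - S_eps S0 \<epsilon>)" using loc[OF xb] r1 gH H0 by auto
    ultimately show "x \<in> Sm" unfolding Sm_def using r1 l0 by auto
  qed
  have Rmeas: "measure lebesgue Rect = ll * H / 4" unfolding Rect_def using l0 H0
    by (subst box2_meas) (auto simp: field_simps)
  have "measure lebesgue Rect \<le> measure lebesgue Sm"
    by (rule measure_mono_fmeasurable[OF RectS _ SmL]) (simp add: Rect_def)
  moreover have "0 < ll * H / 4" using l0 H0 by simp
  ultimately have "0 < measure lebesgue Sm" using Rmeas by linarith
  then show ?thesis using meas_S_eps_half[of S0 \<epsilon>] unfolding Sm_def by simp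
qed

lemma combine:
  fixes W :: "real \<Rightarrow> 'u \<Rightarrow> 'g \<Rightarrow> bool" and En :: "real \<Rightarrow> 'g \<Rightarrow> real"
  assumes e1: "0 < ea" and ca: "0 < ca" and cb: "0 < cb" and p: "p \<le> 0"
    and glob: "\<And>\<epsilon> U G. \<epsilon> \<in> {0<..\<epsilon>s} \<Longrightarrow> W \<epsilon> U G \<Longrightarrow> ca \<le> En \<epsilon> G"
    and loc: "\<And>\<epsilon> U G. \<epsilon> \<in> {0<..ea} \<Longrightarrow> W \<epsilon> U G \<Longrightarrow> cb * \<epsilon> powr p \<le> En \<epsilon> G"
  shows "\<exists>Cc>0. \<forall>\<epsilon>\<in>{0<..\<epsilon>s}. \<forall>U G. W \<epsilon> U G \<longrightarrow> En \<epsilon> G \<ge> Cc * \<epsilon> powr p"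
proof (intro exI[of _ "min cb (ca / ea powr p)"] conjI ballI allI impI)
  show "0 < min cb (ca / ea powr p)" using ca cb e1 by simp
  fix \<epsilon> U G assume ee: "\<epsilon> \<in> {0<..\<epsilon>s}" and w: "W \<epsilon> U G"
  show "min cb (ca / ea powr p) * \<epsilon> powr p \<le> En \<epsilon> G"
  proof (cases "\<epsilon> \<le> ea")
    case True
    have "min cb (ca / ea powr p) * \<epsilon> powr p \<le> cb * \<epsilon> powr p"
      by (intro mult_right_mono) auto
    also have "\<dots> \<le> En \<epsilon> G" using loc[OF _ w] ee True by auto
    finally show ?thesis .
  next
    case False
    have "\<epsilon> powr p \<le> ea powr p" using False p e1 by (intro powr_mono2') auto
    then have "min cb (ca / ea powr p) * \<epsilon> powr p \<le> (ca / ea powr p) * ea powr p"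
      using ca e1 by (intro mult_mono) auto
    also have "\<dots> = ca" using e1 by simp
    also have "\<dots> \<le> En \<epsilon> G" using glob[OF ee w] .
    finally show ?thesis .
  qed
qed

lemma loc_from:
  fixes C S0 :: "(real^2) set" and f :: "real \<Rightarrow> real"
  assumes r0: "r0 > 0" "C \<inter> ball 0 r0 = {x \<in> ball 0 r0. x$2 > 0}" and r1: "r1 > 0" and d: "\<delta> > 0"
    and eq: "\<forall>\<epsilon>\<in>{0..\<epsilon>s}. (C - S_eps S0 \<epsilon>) \<inter> ball 0 r1 =
           {x. \<bar>x$1\<bar> < \<delta> \<and> 0 < x$2 \<and> x$2 < f (x$1) + \<epsilon>} \<inter> ball 0 r1"
  shows "\<exists>r>0. (\<forall>x\<in>ball 0 r. x \<in> C \<longleftrightarrow> 0 < x$2) \<and>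
     (\<forall>\<epsilon>\<in>{0<..\<epsilon>s}. \<forall>x\<in>ball 0 r. x \<in> C - S_eps S0 \<epsilon> \<longleftrightarrow> (0 < x$2 \<and> x$2 < f (x$1) + \<epsilon>))"
proof (intro exI[of _ "min r0 (min r1 \<delta>)"] conjI ballI)
  show "0 < min r0 (min r1 \<delta>)" using r0 r1 d by simp
  fix x :: "real^2" assume x: "x \<in> ball 0 (min r0 (min r1 \<delta>))"
  then have x0: "x \<in> ball 0 r0" by simp
  show "x \<in> C \<longleftrightarrow> 0 < x$2" using r0(2) x0 by blast
  fix \<epsilon> assume e: "\<epsilon> \<in> {0<..\<epsilon>s}"
  have x1: "x \<in> ball 0 r1" using x by simp
  have "\<bar>x$1\<bar> \<le> norm x" by (rule component_le_norm_cart)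
  then have xd: "\<bar>x$1\<bar> < \<delta>" using x by simp
  have "(C - S_eps S0 \<epsilon>) \<inter> ball 0 r1 = {x. \<bar>x$1\<bar> < \<delta> \<and> 0 < x$2 \<and> x$2 < f (x$1) + \<epsilon>} \<inter> ball 0 r1"
    using eq e by auto
  then show "x \<in> C - S_eps S0 \<epsilon> \<longleftrightarrow> (0 < x$2 \<and> x$2 < f (x$1) + \<epsilon>)"
    using x1 xd by blast
qed

lemma glob_part:
  fixes C S0 :: "(real^2) set"
  assumes bC: "bounded C" and oC: "open C" and cS: "compact S0" and es: "\<epsilon>s > 0"
    and SC: "\<forall>\<epsilon>\<in>{0<..\<epsilon>s}. S_eps S0 \<epsilon> \<subseteq> C"
    and mpos: "0 < measure lebesgue (S0 \<inter> {x. x$1 < 0})"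
  shows "\<exists>c0>0. \<forall>\<epsilon> U G. \<epsilon> \<in> {0<..\<epsilon>s} \<longrightarrow> weak_neumann_sol C S0 \<epsilon> U G \<longrightarrow> c0 \<le> energy (Omega_eps C S0 \<epsilon>) G"
proof -
  define m where "m = measure lebesgue (S0 \<inter> {x. x$1 < 0})"
  have CL: "C \<in> lmeasurable" by (rule lmeasurable_open[OF bC oC])
  have "m = measure lebesgue (S_eps S0 \<epsilon>s \<inter> {x::real^2. x$1 < 0})" unfolding m_def by (simp add: meas_S_eps_half)
  also have "\<dots> \<le> measure lebesgue C"
  proof (rule measure_mono_fmeasurable[OF _ _ CL])
    show "S_eps S0 \<epsilon>s \<inter> {x. x $ 1 < 0} \<subseteq> C" using SC es by auto
    show "S_eps S0 \<epsilon>s \<inter> {x::real^2. x $ 1 < 0} \<in> sets lebesgue"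
      by (intro sets.Int closed_leb compact_imp_closed compact_S_eps cS open_leb open_halfspace_component_lt_cart)
  qed
  finally have mC: "m \<le> measure lebesgue C" .
  have m0: "0 < m" using mpos unfolding m_def .
  show ?thesis
  proof (intro exI[of _ "m^2 / measure lebesgue C"] conjI allI impI)
    show "0 < m^2 / measure lebesgue C" using m0 mC by simp
    fix \<epsilon> U G assume "\<epsilon> \<in> {0<..\<epsilon>s}" "weak_neumann_sol C S0 \<epsilon> U G"
    then show "m^2 / measure lebesgue C \<le> energy (Omega_eps C S0 \<epsilon>) G"
      unfolding m_def using global_est[OF _ bC oC cS _ mpos] SC by auto
  qed
qed

lemma cusp_case:
  fixes C S0 :: "(real^2) set"
  assumes bC: "bounded C" and oC: "open C" and cS: "compact S0" and es: "\<epsilon>s > 0"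
    and SC: "\<forall>\<epsilon>\<in>{0<..\<epsilon>s}. S_eps S0 \<epsilon> \<subseteq> C"
    and r: "r > 0" and hr: "\<forall>x\<in>ball 0 r. x \<in> C \<longleftrightarrow> 0 < x$2"
    and loc: "\<forall>\<epsilon>\<in>{0<..\<epsilon>s}. \<forall>x\<in>ball 0 r. x \<in> C - S_eps S0 \<epsilon> \<longleftrightarrow>
                 (0 < x$2 \<and> x$2 < \<kappa> * \<bar>x$1\<bar> powr (1 + \<alpha>) + \<epsilon>)"
    and k: "\<kappa> > 0" and a: "\<alpha> > 2"
  shows "\<exists>Calpha>0. \<forall>\<epsilon>\<in>{0<..\<epsilon>s}. \<forall>U G. weak_neumann_sol C S0 \<epsilon> U G \<longrightarrow>
             energy (Omega_eps C S0 \<epsilon>) G \<ge> Calpha * \<epsilon> powr (3 / (\<alpha> + 1) - 1)"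
proof -
  define f where "f = (\<lambda>t::real. \<kappa> * \<bar>t\<bar> powr (1 + \<alpha>))"
  define K where "K = \<kappa> * 2 powr (1 + \<alpha>)"
  define H where "H = r / 8"
  define \<epsilon>1 where "\<epsilon>1 = min \<epsilon>s (min ((r/4) powr (1 + \<alpha>)) (H / (K + 1)))"
  have K0: "K > 0" unfolding K_def using k by simp
  have H0: "H > 0" unfolding H_def using r by simp
  have e1: "\<epsilon>1 > 0" unfolding \<epsilon>1_def using es r H0 K0 by simp
  have e1s: "\<epsilon>1 \<le> \<epsilon>s" unfolding \<epsilon>1_def by simp
  have a1: "1 + \<alpha> > 0" using a by simp
  have conds: "ll > 0 \<and> 2 * ll + 2 * H \<le> r \<and> (\<forall>t. \<bar>t\<bar> \<le> 2 * ll \<longrightarrow> f t + \<epsilon> \<le> (K + 1) * \<epsilon>)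
       \<and> (K + 1) * \<epsilon> \<le> H \<and> 0 < (K + 1) * \<epsilon>"
    if e: "0 < \<epsilon>" "\<epsilon> \<le> \<epsilon>1" and lld: "ll = \<epsilon> powr (1 / (1 + \<alpha>))" for \<epsilon> ll
  proof (intro conjI allI impI)
    show "ll > 0" using e lld by simp
    have "\<epsilon> \<le> (r/4) powr (1 + \<alpha>)" using e unfolding \<epsilon>1_def by simp
    then have "ll \<le> ((r/4) powr (1 + \<alpha>)) powr (1 / (1 + \<alpha>))"
      unfolding lld using e a1 by (intro powr_mono2) auto
    also have "\<dots> = r/4" using a1 r by (simp add: powr_powr)
    finally show "2 * ll + 2 * H \<le> r" unfolding H_def using r by simp
    fix t assume t: "\<bar>t\<bar> \<le> 2 * ll"
    have "\<bar>t\<bar> powr (1 + \<alpha>) \<le> (2 * ll) powr (1 + \<alpha>)" using t a1 by (intro powr_mono2) auto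
    also have "\<dots> = 2 powr (1 + \<alpha>) * ll powr (1 + \<alpha>)" using e lld by (simp add: powr_mult)
    also have "ll powr (1 + \<alpha>) = \<epsilon>" unfolding lld using a1 e by (simp add: powr_powr)
    finally have "\<kappa> * \<bar>t\<bar> powr (1 + \<alpha>) \<le> \<kappa> * (2 powr (1 + \<alpha>) * \<epsilon>)" using k by (intro mult_left_mono) auto
    then show "f t + \<epsilon> \<le> (K + 1) * \<epsilon>" unfolding f_def K_def by (simp add: algebra_simps)
  next
    show "(K + 1) * \<epsilon> \<le> H" using e K0 unfolding \<epsilon>1_def by (simp add: le_divide_eq mult.commute)
    show "0 < (K + 1) * \<epsilon>" using e K0 by simp
  qed
  have locb: "1 / (512 * (K + 1)) * \<epsilon> powr (3 / (\<alpha> + 1) - 1) \<le> energy (Omega_eps C S0 \<epsilon>) G"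
    if e: "\<epsilon> \<in> {0<..\<epsilon>1}" and w: "weak_neumann_sol C S0 \<epsilon> U G" for \<epsilon> U G
  proof -
    define ll where "ll = \<epsilon> powr (1 / (1 + \<alpha>))"
    have e0: "0 < \<epsilon>" "\<epsilon> \<le> \<epsilon>1" using e by auto
    have es': "\<epsilon> \<in> {0<..\<epsilon>s}" using e e1s by auto
    note c = conds[OF e0 ll_def]
    have "ll^3 / (512 * ((K + 1) * \<epsilon>)) \<le> energy (Omega_eps C S0 \<epsilon>) G"
    proof (rule local_est[OF w bC oC cS _ _ _ _ H0])
      show "S_eps S0 \<epsilon> \<subseteq> C" using SC es' by auto
      show "x \<in> C \<longleftrightarrow> 0 < x $ 2" if "x \<in> ball 0 r" for x using hr that by auto
      show "x \<in> C - S_eps S0 \<epsilon> \<longleftrightarrow> 0 < x $ 2 \<and> x $ 2 < f (x $ 1) + \<epsilon>" if "x \<in> ball 0 r" for x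
        using loc es' that unfolding f_def by auto
    qed (use c in auto)
    moreover have "ll^3 / (512 * ((K + 1) * \<epsilon>)) = 1 / (512 * (K + 1)) * \<epsilon> powr (3 / (\<alpha> + 1) - 1)"
    proof -
      have "ll^3 = ll powr (real 3)" using c by (simp add: powr_realpow)
      also have "\<dots> = \<epsilon> powr (3 / (\<alpha> + 1))" unfolding ll_def using e0 by (simp add: powr_powr add.commute)
      finally have l3: "ll^3 = \<epsilon> powr (3 / (\<alpha> + 1))" .
      have q: "\<epsilon> powr (3 / (\<alpha> + 1) - 1) = \<epsilon> powr (3 / (\<alpha> + 1)) / \<epsilon>" using e0 by (simp add: powr_diff)
      show ?thesis unfolding l3 q
        using e0 K0 by (simp add: divide_simps del: powr_gt_zero)
    qed
    ultimately show ?thesis by simp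
  qed
  have mpos: "0 < measure lebesgue (S0 \<inter> {x. x$1 < 0})"
  proof -
    define ll where "ll = \<epsilon>1 powr (1 / (1 + \<alpha>))"
    note c = conds[OF e1 order_refl ll_def]
    show ?thesis
    proof (rule pos_meas[OF bC cS _ _ _ _ H0])
      show "S_eps S0 \<epsilon>1 \<subseteq> C" using SC e1 e1s by auto
      show "x \<in> C \<longleftrightarrow> 0 < x $ 2" if "x \<in> ball 0 r" for x using hr that by auto
      show "x \<in> C - S_eps S0 \<epsilon>1 \<longleftrightarrow> 0 < x $ 2 \<and> x $ 2 < f (x $ 1) + \<epsilon>1" if "x \<in> ball 0 r" for x
        using loc e1 e1s that unfolding f_def by auto
    qed (use c in auto)
  qed
  obtain c0 where c0: "c0 > 0" "\<forall>\<epsilon> U G. \<epsilon> \<in> {0<..\<epsilon>s} \<longrightarrow> weak_neumann_sol C S0 \<epsilon> U G \<longrightarrow> c0 \<le> energy (Omega_eps C S0 \<epsilon>) G"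
    using glob_part[OF bC oC cS es SC mpos] by blast
  have p: "3 / (\<alpha> + 1) - 1 \<le> 0" using a by (simp add: divide_le_eq)
  show ?thesis
  proof (rule combine[where W="\<lambda>\<epsilon> U G. weak_neumann_sol C S0 \<epsilon> U G" and En="\<lambda>\<epsilon> G. energy (Omega_eps C S0 \<epsilon>) G"
          and cb="1 / (512 * (K + 1))", OF e1 c0(1) _ p])
    show "0 < 1 / (512 * (K + 1))" using K0 by simp
    show "c0 \<le> energy (Omega_eps C S0 \<epsilon>) G" if "\<epsilon> \<in> {0<..\<epsilon>s}" "weak_neumann_sol C S0 \<epsilon> U G" for \<epsilon> U G
      using c0(2) that by blast
    show "1 / (512 * (K + 1)) * \<epsilon> powr (3 / (\<alpha> + 1) - 1) \<le> energy (Omega_eps C S0 \<epsilon>) G"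
      if "\<epsilon> \<in> {0<..\<epsilon>1}" "weak_neumann_sol C S0 \<epsilon> U G" for \<epsilon> U G
      by (rule locb[OF that])
  qed
qed

lemma flat_case:
  fixes C S0 :: "(real^2) set" and h :: "real \<Rightarrow> real"
  assumes bC: "bounded C" and oC: "open C" and cS: "compact S0" and es: "\<epsilon>s > 0"
    and SC: "\<forall>\<epsilon>\<in>{0<..\<epsilon>s}. S_eps S0 \<epsilon> \<subseteq> C"
    and r: "r > 0" and hr: "\<forall>x\<in>ball 0 r. x \<in> C \<longleftrightarrow> 0 < x$2"
    and loc: "\<forall>\<epsilon>\<in>{0<..\<epsilon>s}. \<forall>x\<in>ball 0 r. x \<in> C - S_eps S0 \<epsilon> \<longleftrightarrow>
                 (0 < x$2 \<and> x$2 < h (x$1) + \<epsilon>)"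
    and eta: "\<eta> > 0" "\<And>t. \<bar>t\<bar> < \<eta> \<Longrightarrow> h t = 0"
  shows "\<exists>Cinf>0. \<forall>\<epsilon>\<in>{0<..\<epsilon>s}. \<forall>U G. weak_neumann_sol C S0 \<epsilon> U G \<longrightarrow>
             energy (Omega_eps C S0 \<epsilon>) G \<ge> Cinf * \<epsilon> powr (-1)"
proof -
  define H where "H = r / 8"
  define ll where "ll = min (\<eta> / 4) (r / 8)"
  define \<epsilon>1 where "\<epsilon>1 = min \<epsilon>s H"
  have H0: "H > 0" unfolding H_def using r by simp
  have l0: "ll > 0" unfolding ll_def using r eta by simp
  have e1: "\<epsilon>1 > 0" unfolding \<epsilon>1_def using es H0 by simp
  have e1s: "\<epsilon>1 \<le> \<epsilon>s" unfolding \<epsilon>1_def by simp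
  have lHr: "2 * ll + 2 * H \<le> r" unfolding ll_def H_def using r by linarith
  have gap: "h t + \<epsilon> \<le> \<epsilon>" if "\<bar>t\<bar> \<le> 2 * ll" for t \<epsilon>
  proof -
    have "\<bar>t\<bar> < \<eta>" using that eta(1) unfolding ll_def by simp
    then show ?thesis using eta(2) by simp
  qed
  have locb: "ll^3 / 512 * \<epsilon> powr (-1) \<le> energy (Omega_eps C S0 \<epsilon>) G"
    if e: "\<epsilon> \<in> {0<..\<epsilon>1}" and w: "weak_neumann_sol C S0 \<epsilon> U G" for \<epsilon> U G
  proof -
    have e0: "0 < \<epsilon>" "\<epsilon> \<le> \<epsilon>1" using e by auto
    have es': "\<epsilon> \<in> {0<..\<epsilon>s}" using e e1s by auto
    have "ll^3 / (512 * \<epsilon>) \<le> energy (Omega_eps C S0 \<epsilon>) G"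
    proof (rule local_est[OF w bC oC cS _ _ _ l0 H0 lHr])
      show "S_eps S0 \<epsilon> \<subseteq> C" using SC es' by auto
      show "x \<in> C \<longleftrightarrow> 0 < x $ 2" if "x \<in> ball 0 r" for x using hr that by auto
      show "x \<in> C - S_eps S0 \<epsilon> \<longleftrightarrow> 0 < x $ 2 \<and> x $ 2 < h (x $ 1) + \<epsilon>" if "x \<in> ball 0 r" for x
        using loc es' that by auto
      show "h t + \<epsilon> \<le> \<epsilon>" if "\<bar>t\<bar> \<le> 2 * ll" for t using gap that .
      show "\<epsilon> \<le> H" using e0 unfolding \<epsilon>1_def by simp
      show "0 < \<epsilon>" using e0 by simp
    qed
    moreover have "ll^3 / (512 * \<epsilon>) = ll^3 / 512 * \<epsilon> powr (-1)"
      using e0(1) by (simp add: powr_neg_one)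
    ultimately show ?thesis by simp
  qed
  have mpos: "0 < measure lebesgue (S0 \<inter> {x. x$1 < 0})"
  proof (rule pos_meas[OF bC cS _ _ _ l0 H0 lHr])
    show "S_eps S0 \<epsilon>1 \<subseteq> C" using SC e1 e1s by auto
    show "x \<in> C \<longleftrightarrow> 0 < x $ 2" if "x \<in> ball 0 r" for x using hr that by auto
    show "x \<in> C - S_eps S0 \<epsilon>1 \<longleftrightarrow> 0 < x $ 2 \<and> x $ 2 < h (x $ 1) + \<epsilon>1" if "x \<in> ball 0 r" for x
      using loc e1 e1s that by auto
    show "h t + \<epsilon>1 \<le> \<epsilon>1" if "\<bar>t\<bar> \<le> 2 * ll" for t using gap that .
    show "\<epsilon>1 \<le> H" unfolding \<epsilon>1_def by simp
  qed
  obtain c0 where c0: "c0 > 0" "\<forall>\<epsilon> U G. \<epsilon> \<in> {0<..\<epsilon>s} \<longrightarrow> weak_neumann_sol C S0 \<epsilon> U G \<longrightarrow> c0 \<le> energy (Omega_eps C S0 \<epsilon>) G"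
    using glob_part[OF bC oC cS es SC mpos] by blast
  show ?thesis
  proof (rule combine[where W="\<lambda>\<epsilon> U G. weak_neumann_sol C S0 \<epsilon> U G" and En="\<lambda>\<epsilon> G. energy (Omega_eps C S0 \<epsilon>) G"
          and cb="ll^3 / 512" and p="-1", OF e1 c0(1)])
    show "0 < ll^3 / 512" using l0 by simp
    show "(-1::real) \<le> 0" by simp
    show "c0 \<le> energy (Omega_eps C S0 \<epsilon>) G" if "\<epsilon> \<in> {0<..\<epsilon>s}" "weak_neumann_sol C S0 \<epsilon> U G" for \<epsilon> U G
      using c0(2) that by blast
    show "ll^3 / 512 * \<epsilon> powr (-1) \<le> energy (Omega_eps C S0 \<epsilon>) G"
      if "\<epsilon> \<in> {0<..\<epsilon>1}" "weak_neumann_sol C S0 \<epsilon> U G" for \<epsilon> U G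
      by (rule locb[OF that])
  qed
qed

theorem proposition2p2:
  fixes C S0 :: "(real^2) set" and \<epsilon>s :: real
  assumes "smooth_domain C" and "bounded C" and "connected C" and "symmetric1 C"
    and "\<exists>r>0. C \<inter> ball 0 r = {x \<in> ball 0 r. x$2 > 0}"
    and "compact S0" and "connected S0" and "symmetric1 S0"
    and "\<epsilon>s > 0" and "\<forall>\<epsilon>\<in>{0<..\<epsilon>s}. S_eps S0 \<epsilon> \<subseteq> C"
  shows
    "(\<forall>\<kappa> \<alpha> \<delta>. \<kappa> > 0 \<and> \<alpha> > 2 \<and> \<delta> > 0 \<and>
        (\<exists>r>0. \<forall>\<epsilon>\<in>{0..\<epsilon>s}. (C - S_eps S0 \<epsilon>) \<inter> ball 0 r =
           {x. \<bar>x$1\<bar> < \<delta> \<and> 0 < x$2 \<and> x$2 < \<kappa> * \<bar>x$1\<bar> powr (1 + \<alpha>) + \<epsilon>} \<inter> ball 0 r)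
      \<longrightarrow> (\<exists>Calpha>0. \<forall>\<epsilon>\<in>{0<..\<epsilon>s}. \<forall>U G. weak_neumann_sol C S0 \<epsilon> U G \<longrightarrow>
             energy (Omega_eps C S0 \<epsilon>) G \<ge> Calpha * \<epsilon> powr (3 / (\<alpha> + 1) - 1)))
   \<and> (\<forall>h \<delta>. smooth_fun h \<and> (\<forall>t. h t \<ge> 0) \<and> (\<exists>\<eta>>0. \<forall>t. \<bar>t\<bar> < \<eta> \<longrightarrow> h t = 0) \<and> \<delta> > 0 \<and>
        (\<exists>r>0. \<forall>\<epsilon>\<in>{0..\<epsilon>s}. (C - S_eps S0 \<epsilon>) \<inter> ball 0 r =
           {x. \<bar>x$1\<bar> < \<delta> \<and> 0 < x$2 \<and> x$2 < h (x$1) + \<epsilon>} \<inter> ball 0 r)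
      \<longrightarrow> (\<exists>Cinf>0. \<forall>\<epsilon>\<in>{0<..\<epsilon>s}. \<forall>U G. weak_neumann_sol C S0 \<epsilon> U G \<longrightarrow>
             energy (Omega_eps C S0 \<epsilon>) G \<ge> Cinf * \<epsilon> powr (-1)))"
proof -
  have oC: "open C" using assms(1) unfolding smooth_domain_def by auto
  have bC: "bounded C" and cS: "compact S0" and es: "\<epsilon>s > 0" and SC: "\<forall>\<epsilon>\<in>{0<..\<epsilon>s}. S_eps S0 \<epsilon> \<subseteq> C"
    using assms by auto
  obtain r0 where r0: "r0 > 0" "C \<inter> ball 0 r0 = {x \<in> ball 0 r0. x$2 > 0}" using assms(5) by blast
  show ?thesis
  proof (intro conjI allI impI)
    fix \<kappa> \<alpha> \<delta> :: real
    assume h: "\<kappa> > 0 \<and> \<alpha> > 2 \<and> \<delta> > 0 \<and>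
        (\<exists>r>0. \<forall>\<epsilon>\<in>{0..\<epsilon>s}. (C - S_eps S0 \<epsilon>) \<inter> ball 0 r =
           {x. \<bar>x$1\<bar> < \<delta> \<and> 0 < x$2 \<and> x$2 < \<kappa> * \<bar>x$1\<bar> powr (1 + \<alpha>) + \<epsilon>} \<inter> ball 0 r)"
    then obtain r1 where r1: "r1 > 0" "\<forall>\<epsilon>\<in>{0..\<epsilon>s}. (C - S_eps S0 \<epsilon>) \<inter> ball 0 r1 =
           {x. \<bar>x$1\<bar> < \<delta> \<and> 0 < x$2 \<and> x$2 < (\<lambda>t. \<kappa> * \<bar>t\<bar> powr (1 + \<alpha>)) (x$1) + \<epsilon>} \<inter> ball 0 r1"
      by auto
    obtain r where r: "r > 0" "\<forall>x\<in>ball 0 r. x \<in> C \<longleftrightarrow> 0 < x$2"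
      "\<forall>\<epsilon>\<in>{0<..\<epsilon>s}. \<forall>x\<in>ball 0 r. x \<in> C - S_eps S0 \<epsilon> \<longleftrightarrow> (0 < x$2 \<and> x$2 < (\<lambda>t. \<kappa> * \<bar>t\<bar> powr (1 + \<alpha>)) (x$1) + \<epsilon>)"
      using loc_from[OF r0 r1(1) _ r1(2)] h by blast
    show "\<exists>Calpha>0. \<forall>\<epsilon>\<in>{0<..\<epsilon>s}. \<forall>U G. weak_neumann_sol C S0 \<epsilon> U G \<longrightarrow>
             energy (Omega_eps C S0 \<epsilon>) G \<ge> Calpha * \<epsilon> powr (3 / (\<alpha> + 1) - 1)"
      by (rule cusp_case[OF bC oC cS es SC r(1) r(2)]) (use r(3) h in auto)
  next
    fix h :: "real \<Rightarrow> real" and \<delta> :: real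
    assume hh: "smooth_fun h \<and> (\<forall>t. h t \<ge> 0) \<and> (\<exists>\<eta>>0. \<forall>t. \<bar>t\<bar> < \<eta> \<longrightarrow> h t = 0) \<and> \<delta> > 0 \<and>
        (\<exists>r>0. \<forall>\<epsilon>\<in>{0..\<epsilon>s}. (C - S_eps S0 \<epsilon>) \<inter> ball 0 r =
           {x. \<bar>x$1\<bar> < \<delta> \<and> 0 < x$2 \<and> x$2 < h (x$1) + \<epsilon>} \<inter> ball 0 r)"
    then obtain r1 where r1: "r1 > 0" "\<forall>\<epsilon>\<in>{0..\<epsilon>s}. (C - S_eps S0 \<epsilon>) \<inter> ball 0 r1 =
           {x. \<bar>x$1\<bar> < \<delta> \<and> 0 < x$2 \<and> x$2 < h (x$1) + \<epsilon>} \<inter> ball 0 r1"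
      by auto
    obtain \<eta> where eta: "\<eta> > 0" "\<And>t. \<bar>t\<bar> < \<eta> \<Longrightarrow> h t = 0" using hh by blast
    obtain r where r: "r > 0" "\<forall>x\<in>ball 0 r. x \<in> C \<longleftrightarrow> 0 < x$2"
      "\<forall>\<epsilon>\<in>{0<..\<epsilon>s}. \<forall>x\<in>ball 0 r. x \<in> C - S_eps S0 \<epsilon> \<longleftrightarrow> (0 < x$2 \<and> x$2 < h (x$1) + \<epsilon>)"
      using loc_from[OF r0 r1(1) _ r1(2)] hh by blast
    show "\<exists>Cinf>0. \<forall>\<epsilon>\<in>{0<..\<epsilon>s}. \<forall>U G. weak_neumann_sol C S0 \<epsilon> U G \<longrightarrow>
             energy (Omega_eps C S0 \<epsilon>) G \<ge> Cinf * \<epsilon> powr (-1)"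
      by (rule flat_case[OF bC oC cS es SC r eta])
  qed
qed

end
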